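(* Let $\mathbf x_1,\ldots,\mathbf x_n\in\mathbb{R}^d\setminus\{\mathbf 0\}$ and suppose the logit likelihood $\ell(\beta)=\prod_{i=1}^n\frac{1}{1+\exp(\mathbf x_i^T\beta)}$ has a unique global maximizer on $\mathbb{R}^d$. Let $\pi(\beta)\propto\ell(\beta)$ (flat prior) and let $P(\beta)=\sum_{j=1}^d a_j\beta_j$ be any first-degree polynomial. Then $\lim_{\rho\to\infty}\int_{\partial B_\rho}\pi\,\nabla P\cdot\mathbf n\,d\sigma=0$, where $B_\rho$ is the ball of radius $\rho$ centered at the origin; consequently the zero-variance estimator is unbiased: $\mathbb{E}_\pi[\mathbf a^T\mathbf z]=0$, where $\mathbf z=-\frac12\nabla\ln\pi$.
   Context: $\mathbf n$ is the outward unit normal to the sphere $\partial B_\rho$, $d\sigma$ the surface measure. For linear $P$ and $\psi=P\sqrt\pi$, $\frac{H\psi}{\sqrt\pi}=\mathbf a^T\mathbf z$ where $H=-\frac12\Delta+\frac{\Delta\sqrt\pi}{2\sqrt\pi}$. *)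

theory Defs
  imports "HOL-Analysis.Analysis"
begin

definition logit_lik :: "nat \<Rightarrow> (nat \<Rightarrow> real ^ 'd) \<Rightarrow> real ^ 'd \<Rightarrow> real" where
  "logit_lik n x \<beta> = (\<Prod>i<n. 1 / (1 + exp (x i \<bullet> \<beta>)))"

definition logit_post :: "nat \<Rightarrow> (nat \<Rightarrow> real ^ 'd) \<Rightarrow> real ^ 'd \<Rightarrow> real" where
  "logit_post n x \<beta> = logit_lik n x \<beta> / (\<integral>b. logit_lik n x b \<partial>lborel)"

text \<open>Surface measure on the sphere of radius rho centred at 0 (rho > 0), defined as the
  cone measure: sigma(A) = (d / rho) * lambda({t y | 0 < t <= 1, y in A}), i.e. the image of
  Lebesgue measure on the ball under radial projection onto the sphere, scaled by d / rho.\<close>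
definition sphere_measure :: "real \<Rightarrow> (real ^ 'd) measure" where
  "sphere_measure \<rho> =
     scale_measure (ennreal (real CARD('d) / \<rho>))
       (distr (restrict_space lborel (ball 0 \<rho>)) borel (\<lambda>y. (\<rho> / norm y) *\<^sub>R y))"

end

theory Submission
  imports Defs
begin


lemma pos1e[simp]: "0 < 1 + exp (t::real)"
  by (simp add: add_pos_pos)

lemma inv_le1[simp]: "1 / (1 + exp (t::real)) \<le> 1"
  using exp_gt_zero[of t] by (simp add: field_simps)

lemma ell_exp:
  "logit_lik n x b = exp (- (\<Sum>i<n. ln (1 + exp (x i \<bullet> b))))"
  unfolding logit_lik_def exp_minus exp_sum[OF finite_lessThan]
  by (simp add: prod_inversef[symmetric] divide_inverse)

lemma ell_pos: "logit_lik n x b > 0"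
  unfolding ell_exp by simp

lemma ell_le1: "logit_lik n x b \<le> 1"
  unfolding logit_lik_def by (intro prod_le_1) auto

lemma ell_le_factor:
  assumes "i < n" shows "logit_lik n x b \<le> 1 / (1 + exp (x i \<bullet> b))"
proof -
  have "logit_lik n x b = 1 / (1 + exp (x i \<bullet> b)) * (\<Prod>j\<in>{..<n}-{i}. 1 / (1 + exp (x j \<bullet> b)))"
    unfolding logit_lik_def using assms by (subst prod.remove[of _ i]) auto
  also have "\<dots> \<le> 1 / (1 + exp (x i \<bullet> b)) * 1"
    by (intro mult_left_mono prod_le_1) auto
  finally show ?thesis by simp
qed

lemma dir_pos:
  fixes x :: "nat \<Rightarrow> real ^ 'd"
  assumes unique_max: "\<exists>!b. \<forall>\<beta>. logit_lik n x \<beta> \<le> logit_lik n x b"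
    and v: "v \<noteq> 0"
  shows "\<exists>i<n. x i \<bullet> v > 0"
proof (rule ccontr)
  assume "\<not> ?thesis"
  hence nv: "\<And>i. i < n \<Longrightarrow> x i \<bullet> v \<le> 0" by force
  obtain b where b: "\<forall>\<beta>. logit_lik n x \<beta> \<le> logit_lik n x b"
    and u: "\<And>b'. \<forall>\<beta>. logit_lik n x \<beta> \<le> logit_lik n x b' \<Longrightarrow> b' = b"
    using unique_max by blast
  have "logit_lik n x b \<le> logit_lik n x (b + v)"
    unfolding logit_lik_def
  proof (intro prod_mono conjI)
    fix i assume "i \<in> {..<n}"
    hence "x i \<bullet> (b + v) \<le> x i \<bullet> b" using nv by (simp add: inner_add_right)
    thus "1 / (1 + exp (x i \<bullet> b)) \<le> 1 / (1 + exp (x i \<bullet> (b + v)))"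
      by (intro divide_left_mono) (auto simp: add_pos_pos)
  qed auto
  hence "b + v = b" using b by (intro u) (auto intro: order_trans)
  thus False using v by simp
qed

lemma inv_le_exp: "1 / (1 + exp (u::real)) \<le> exp (- u)"
  by (simp add: field_simps exp_minus)

lemma decay:
  fixes x :: "nat \<Rightarrow> real ^ 'd"
  assumes unique_max: "\<exists>!b. \<forall>\<beta>. logit_lik n x \<beta> \<le> logit_lik n x b"
  shows "\<exists>c>0. \<forall>\<beta>. logit_lik n x \<beta> \<le> exp (- c * norm \<beta>)"
proof -
  define h where "h v = (\<Sum>i<n. max 0 (x i \<bullet> v))" for v :: "real ^ 'd"
  have cont: "continuous_on (sphere 0 1) h" unfolding h_def by (intro continuous_intros)
  have ne: "sphere (0::real^'d) 1 \<noteq> {}" by simp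
  obtain v0 where v0: "v0 \<in> sphere 0 1" and v0min: "\<And>v. v \<in> sphere 0 1 \<Longrightarrow> h v0 \<le> h v"
    using continuous_attains_inf[OF compact_sphere ne cont] by blast
  have "v0 \<noteq> 0" using v0 by auto
  then obtain i0 where i0: "i0 < n" "x i0 \<bullet> v0 > 0" using dir_pos[OF unique_max] by blast
  have hpos: "h v0 > 0" unfolding h_def
    by (rule sum_pos2[of _ i0]) (use i0 in auto)
  have npos: "n > 0" using i0 by simp
  define c where "c = h v0 / n"
  have cpos: "c > 0" unfolding c_def using hpos npos by simp
  have "\<forall>\<beta>. logit_lik n x \<beta> \<le> exp (- c * norm \<beta>)"
  proof
    fix \<beta> :: "real ^ 'd"
    show "logit_lik n x \<beta> \<le> exp (- c * norm \<beta>)"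
    proof (cases "\<beta> = 0")
      case True thus ?thesis using ell_le1[of n x \<beta>] by simp
    next
      case False
      define v where "v = \<beta> /\<^sub>R norm \<beta>"
      have vs: "v \<in> sphere 0 1" using False unfolding v_def by simp
      have "\<exists>i<n. max 0 (x i \<bullet> v) \<ge> c"
      proof (rule ccontr)
        assume "\<not> ?thesis"
        hence lt: "\<And>i. i < n \<Longrightarrow> max 0 (x i \<bullet> v) < c" by force
        have "h v < (\<Sum>i<n. c)" unfolding h_def
          by (rule sum_strict_mono) (use npos lt in auto)
        also have "\<dots> = h v0" unfolding c_def using npos by simp
        finally show False using v0min[OF vs] by simp
      qed
      then obtain i where i: "i < n" "max 0 (x i \<bullet> v) \<ge> c" by blast
      hence xv: "x i \<bullet> v \<ge> c" using cpos by (auto simp: max_def split: if_splits)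
      have "x i \<bullet> \<beta> = norm \<beta> * (x i \<bullet> v)"
        unfolding v_def using False by (simp add: inner_scaleR_right)
      hence xb: "x i \<bullet> \<beta> \<ge> c * norm \<beta>"
        using xv by (metis mult.commute mult_right_mono norm_ge_zero)
      have "logit_lik n x \<beta> \<le> 1 / (1 + exp (x i \<bullet> \<beta>))" by (rule ell_le_factor[OF i(1)])
      also have "\<dots> \<le> exp (- (x i \<bullet> \<beta>))" by (rule inv_le_exp)
      also have "\<dots> \<le> exp (- c * norm \<beta>)" using xb by simp
      finally show ?thesis .
    qed
  qed
  thus ?thesis using cpos by blast
qed



lemma poly_exp_ev:
  fixes c :: real assumes c: "c > 0"
  shows "eventually (\<lambda>t. t ^ D \<le> exp (c * t)) at_top"
proof -
  have lim: "((\<lambda>t. (c * t) ^ D / exp (c * t)) \<longlongrightarrow> 0) at_top"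
    by (rule filterlim_compose[OF tendsto_power_div_exp_0]) (rule filterlim_tendsto_pos_mult_at_top[OF tendsto_const c filterlim_ident])
  have "c ^ D > 0" using c by simp
  hence "eventually (\<lambda>t. (c * t) ^ D / exp (c * t) < c ^ D) at_top"
    using order_tendstoD(2)[OF lim] by blast
  thus ?thesis
  proof (rule eventually_mono)
    fix t assume "(c * t) ^ D / exp (c * t) < c ^ D"
    hence "c ^ D * t ^ D < c ^ D * exp (c * t)" by (simp add: field_simps power_mult_distrib)
    thus "t ^ D \<le> exp (c * t)" using \<open>c ^ D > 0\<close> by simp
  qed
qed

lemma exp_norm_integrable:
  fixes c :: real assumes c: "c > 0"
  shows "integrable lborel (\<lambda>\<beta>::real ^ 'd. exp (- c * norm \<beta>))"
proof (rule integrableI_bounded)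
  show "(\<lambda>\<beta>::real ^ 'd. exp (- c * norm \<beta>)) \<in> borel_measurable lborel" by measurable
  define D where "D = DIM(real ^ 'd)"
  define V where "V = unit_ball_vol (real D)"
  have V: "V \<ge> 0" unfolding V_def by simp
  define u where "u k = exp (- c * real k) * (V * (real k + 1) ^ D)" for k :: nat
  have u_nn: "u k \<ge> 0" for k unfolding u_def using V by simp
  have su: "summable u"
  proof -
    have "eventually (\<lambda>t. t ^ D \<le> exp (c / 2 * t)) at_top" using poly_exp_ev[of "c/2" D] c by simp
    hence "eventually (\<lambda>k. (real k + 1) ^ D \<le> exp (c / 2 * (real k + 1))) sequentially"
      by (rule eventually_compose_filterlim)
         (subst add.commute, rule filterlim_tendsto_add_at_top[OF tendsto_const filterlim_real_sequentially])
    then obtain N where N: "\<And>k. k \<ge> N \<Longrightarrow> (real k + 1) ^ D \<le> exp (c / 2 * (real k + 1))"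
      by (auto simp: eventually_sequentially)
    have g: "summable (\<lambda>k. V * exp (c / 2) * exp (- c / 2) ^ k)"
      using c by (intro summable_mult summable_geometric) simp
    show ?thesis
    proof (rule summable_comparison_test'[OF g])
      fix k assume "k \<ge> N"
      have "norm (u k) = exp (- c * real k) * (V * (real k + 1) ^ D)" using u_nn by (simp add: u_def)
      also have "\<dots> \<le> exp (- c * real k) * (V * exp (c / 2 * (real k + 1)))"
        using N[OF \<open>k \<ge> N\<close>] V by (intro mult_left_mono) auto
      also have "\<dots> = V * exp (c / 2) * exp (- c / 2) ^ k"
        by (simp add: exp_of_nat_mult[symmetric] exp_add[symmetric] algebra_simps) (simp add: field_simps)
      finally show "norm (u k) \<le> V * exp (c / 2) * exp (- c / 2) ^ k" .
    qed
  qed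
  have "(\<integral>\<^sup>+\<beta>. ennreal (norm (exp (- c * norm (\<beta>::real^'d)))) \<partial>lborel)
      \<le> (\<integral>\<^sup>+\<beta>. (\<Sum>k. ennreal (exp (- c * real k)) * indicator (ball (0::real^'d) (real k + 1)) \<beta>) \<partial>lborel)"
  proof (rule nn_integral_mono)
    fix \<beta> :: "real ^ 'd"
    define k where "k = nat \<lfloor>norm \<beta>\<rfloor>"
    have kf: "real k = of_int \<lfloor>norm \<beta>\<rfloor>" unfolding k_def by simp
    have k1: "real k \<le> norm \<beta>" unfolding kf by linarith
    have k2: "norm \<beta> < real k + 1" unfolding kf by linarith
    have "ennreal (norm (exp (- c * norm \<beta>))) \<le> ennreal (exp (- c * real k)) * indicator (ball (0::real^'d) (real k + 1)) \<beta>"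
      using k1 k2 c by (simp add: ennreal_leI mult_left_mono)
    also have "\<dots> \<le> (\<Sum>k. ennreal (exp (- c * real k)) * indicator (ball (0::real^'d) (real k + 1)) \<beta>)"
    proof -
      let ?F = "\<lambda>k. ennreal (exp (- c * real k)) * indicator (ball (0::real^'d) (real k + 1)) \<beta>"
      have "(\<Sum>k'\<in>{k}. ?F k') \<le> suminf ?F" by (rule sum_le_suminf) (simp_all add: summableI)
      thus ?thesis by (metis (no_types, lifting) sum.insert_if sum.empty add.right_neutral finite.emptyI empty_iff)
    qed
    finally show "ennreal (norm (exp (- c * norm \<beta>))) \<le> (\<Sum>k. ennreal (exp (- c * real k)) * indicator (ball (0::real^'d) (real k + 1)) \<beta>)" .
  qed
  also have "\<dots> = (\<Sum>k. \<integral>\<^sup>+\<beta>. ennreal (exp (- c * real k)) * indicator (ball (0::real^'d) (real k + 1)) \<beta> \<partial>lborel)"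
    by (rule nn_integral_suminf) (intro borel_measurable_times_ennreal borel_measurable_const borel_measurable_indicator, simp)
  also have "\<dots> = (\<Sum>k. ennreal (u k))"
    by (intro suminf_cong, subst nn_integral_cmult_indicator) (simp_all add: emeasure_ball u_def V_def D_def ennreal_mult')
  also have "\<dots> = ennreal (suminf u)" using su u_nn by (simp add: suminf_ennreal2)
  also have "\<dots> < \<infinity>" by simp
  finally show "(\<integral>\<^sup>+\<beta>. ennreal (norm (exp (- c * norm (\<beta>::real^'d)))) \<partial>lborel) < \<infinity>" .
qed



definition Phi :: "nat \<Rightarrow> (nat \<Rightarrow> real) \<Rightarrow> (nat \<Rightarrow> real) \<Rightarrow> real \<Rightarrow> real" where
  "Phi n u w t = exp (- (\<Sum>i<n. ln (1 + exp (u i + t * w i))))"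

definition Phi' :: "nat \<Rightarrow> (nat \<Rightarrow> real) \<Rightarrow> (nat \<Rightarrow> real) \<Rightarrow> real \<Rightarrow> real" where
  "Phi' n u w t = Phi n u w t * - (\<Sum>i<n. exp (u i + t * w i) / (1 + exp (u i + t * w i)) * w i)"

lemma Phi_deriv: "(Phi n u w has_real_derivative Phi' n u w t) (at t)"
  unfolding Phi_def Phi'_def
  by (rule derivative_eq_intros refl | simp)+

lemma sig_abs: "\<bar>exp (s::real) / (1 + exp s) * v\<bar> \<le> \<bar>v\<bar>"
proof -
  have h: "exp s / (1 + exp s) \<le> 1" "0 \<le> exp s / (1 + exp s)" by simp_all
  have "\<bar>exp s / (1 + exp s) * v\<bar> = exp s / (1 + exp s) * \<bar>v\<bar>" by (simp add: abs_mult)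
  also have "\<dots> \<le> \<bar>v\<bar>" by (rule mult_left_le_one_le) (use h in auto)
  finally show ?thesis .
qed

lemma sum_sig_abs: "\<bar>\<Sum>i<n. exp (s i::real) / (1 + exp (s i)) * v i\<bar> \<le> (\<Sum>i<n. \<bar>v i\<bar>)"
  by (rule order_trans[OF sum_abs]) (intro sum_mono sig_abs)

lemma Phi'_bound: "\<bar>Phi' n u w t\<bar> \<le> Phi n u w t * (\<Sum>i<n. \<bar>w i\<bar>)"
proof -
  have "\<bar>Phi' n u w t\<bar> = Phi n u w t * \<bar>\<Sum>i<n. exp (u i + t * w i) / (1 + exp (u i + t * w i)) * w i\<bar>"
    unfolding Phi'_def by (simp add: abs_mult Phi_def)
  also have "\<dots> \<le> Phi n u w t * (\<Sum>i<n. \<bar>w i\<bar>)"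
    by (intro mult_left_mono sum_sig_abs) (simp add: Phi_def)
  finally show ?thesis .
qed

lemma ln_shift: "ln (1 + exp (s + v)) \<ge> ln (1 + exp s) - \<bar>v::real\<bar>"
proof -
  have "exp (- \<bar>v\<bar>) * (1 + exp s) \<le> 1 + exp (s + v)"
  proof -
    have "exp (- \<bar>v\<bar>) \<le> 1" by simp
    moreover have "exp (- \<bar>v\<bar>) * exp s \<le> exp (s + v)"
      by (simp add: exp_add[symmetric])
    moreover have "exp (- \<bar>v\<bar>) * (1 + exp s) = exp (- \<bar>v\<bar>) + exp (- \<bar>v\<bar>) * exp s"
      by (simp add: algebra_simps)
    ultimately show ?thesis by linarith
  qed
  hence "ln (exp (- \<bar>v\<bar>) * (1 + exp s)) \<le> ln (1 + exp (s + v))"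
    by (subst ln_le_cancel_iff) auto
  moreover have "ln (exp (- \<bar>v\<bar>) * (1 + exp s)) = - \<bar>v\<bar> + ln (1 + exp s)"
  proof -
    have ne: "1 + exp s \<noteq> 0" using pos1e[of s] by linarith
    show ?thesis using ne by (subst ln_mult) auto
  qed
  ultimately show ?thesis by linarith
qed

lemma Phi_grow: "Phi n u w t \<le> exp ((\<Sum>i<n. \<bar>w i\<bar>) * \<bar>t\<bar>) * Phi n u w 0"
proof -
  have a: "(\<Sum>i<n. ln (1 + exp (u i + t * w i))) \<ge> (\<Sum>i<n. ln (1 + exp (u i)) - \<bar>t * w i\<bar>)"
    by (intro sum_mono ln_shift)
  have e: "(\<Sum>i<n. ln (1 + exp (u i)) - \<bar>t * w i\<bar>) = (\<Sum>i<n. ln (1 + exp (u i))) - (\<Sum>i<n. \<bar>w i\<bar>) * \<bar>t\<bar>"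
    by (simp add: sum_subtractf sum_distrib_left abs_mult mult.commute)
  have "- (\<Sum>i<n. ln (1 + exp (u i + t * w i))) \<le> (\<Sum>i<n. \<bar>w i\<bar>) * \<bar>t\<bar> + - (\<Sum>i<n. ln (1 + exp (u i)))"
    using a e by linarith
  thus ?thesis unfolding Phi_def by (simp add: exp_add[symmetric])
qed



lemma ell_fun: "logit_lik n x = (\<lambda>b. exp (- (\<Sum>i<n. ln (1 + exp (x i \<bullet> b)))))"
  by (rule ext) (rule ell_exp)

lemma ell_meas: "logit_lik n x \<in> borel_measurable borel"
  unfolding ell_fun by measurable

lemma ell_Phi: "logit_lik n x (t *\<^sub>R a + \<beta>) = Phi n (\<lambda>i. x i \<bullet> \<beta>) (\<lambda>i. x i \<bullet> a) t"
  unfolding ell_exp Phi_def by (simp add: inner_add_right add.commute)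

lemma integral_zero:
  fixes x :: "nat \<Rightarrow> real ^ 'd" and a :: "real ^ 'd"
  assumes int: "integrable lborel (logit_lik n x)"
  shows "(\<integral>\<beta>. logit_lik n x \<beta> * (\<Sum>i<n. exp (x i \<bullet> \<beta>) / (1 + exp (x i \<bullet> \<beta>)) * (x i \<bullet> a)) \<partial>lborel) = 0"
proof -
  define L where "L = logit_lik n x"
  define g where "g \<beta> = (\<Sum>i<n. exp (x i \<bullet> \<beta>) / (1 + exp (x i \<bullet> \<beta>)) * (x i \<bullet> a))" for \<beta> :: "real ^ 'd"
  define h where "h k = inverse (real (Suc k))" for k :: nat
  define s where "s k \<beta> = (L (h k *\<^sub>R a + \<beta>) - L \<beta>) / h k" for k \<beta>
  define f where "f \<beta> = L \<beta> * - g \<beta>" for \<beta>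
  define K where "K = (\<Sum>i<n. \<bar>x i \<bullet> a\<bar>)"
  define w where "w \<beta> = K * exp K * L \<beta>" for \<beta>
  have hpos: "h k > 0" for k unfolding h_def by simp
  have hle: "h k \<le> 1" for k unfolding h_def by (simp add: field_simps)
  have lm[measurable]: "L \<in> borel_measurable borel" unfolding L_def by (rule ell_meas)
  have Phi0: "L \<beta> = Phi n (\<lambda>i. x i \<bullet> \<beta>) (\<lambda>i. x i \<bullet> a) 0" for \<beta>
    using ell_Phi[of n x 0 a \<beta>] unfolding L_def by simp
  have PhiT: "L (t *\<^sub>R a + \<beta>) = Phi n (\<lambda>i. x i \<bullet> \<beta>) (\<lambda>i. x i \<bullet> a) t" for t \<beta>
    unfolding L_def by (rule ell_Phi)
  have Phi'0: "Phi' n (\<lambda>i. x i \<bullet> \<beta>) (\<lambda>i. x i \<bullet> a) 0 = f \<beta>" for \<beta>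
    unfolding Phi'_def f_def g_def Phi0 by simp
  have shift_int: "integrable lborel (\<lambda>\<beta>. L (c + \<beta>))" for c :: "real ^ 'd"
  proof -
    have "integrable (distr lborel borel ((+) c)) L" using int unfolding L_def lborel_distr_plus .
    thus ?thesis by (subst (asm) integrable_distr_eq) auto
  qed
  have shift_eq: "(\<integral>\<beta>. L (c + \<beta>) \<partial>lborel) = (\<integral>\<beta>. L \<beta> \<partial>lborel)" for c :: "real ^ 'd"
  proof -
    have "(\<integral>\<beta>. L \<beta> \<partial>distr lborel borel ((+) c)) = (\<integral>\<beta>. L (c + \<beta>) \<partial>lborel)"
      by (rule integral_distr) auto
    thus ?thesis unfolding lborel_distr_plus by simp
  qed
  have sint0: "(\<integral>\<beta>. s k \<beta> \<partial>lborel) = 0" for k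
    unfolding s_def using shift_int int shift_eq unfolding L_def by (simp add: integral_diff)
  have lim: "(\<lambda>k. \<integral>\<beta>. s k \<beta> \<partial>lborel) \<longlonglongrightarrow> (\<integral>\<beta>. f \<beta> \<partial>lborel)"
  proof (rule integral_dominated_convergence[where w = w])
    show "f \<in> borel_measurable lborel" unfolding f_def g_def by measurable
    show "s k \<in> borel_measurable lborel" for k unfolding s_def by measurable
    show "integrable lborel w" unfolding w_def using int unfolding L_def by simp
    show "AE \<beta> in lborel. (\<lambda>k. s k \<beta>) \<longlonglongrightarrow> f \<beta>"
    proof (rule AE_I2)
      fix \<beta> :: "real ^ 'd"
      let ?P = "Phi n (\<lambda>i. x i \<bullet> \<beta>) (\<lambda>i. x i \<bullet> a)"
      have d: "((\<lambda>t. (?P (0 + t) - ?P 0) / t) \<longlongrightarrow> f \<beta>) (at 0)"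
        using Phi_deriv[of n "\<lambda>i. x i \<bullet> \<beta>" "\<lambda>i. x i \<bullet> a" 0] unfolding DERIV_def Phi'0 .
      have hl: "filterlim h (at 0) sequentially"
        unfolding filterlim_at using LIMSEQ_inverse_real_of_nat hpos
        by (auto simp: h_def[abs_def] intro!: always_eventually)
      have "(\<lambda>k. (?P (0 + h k) - ?P 0) / h k) \<longlonglongrightarrow> f \<beta>"
        by (rule filterlim_compose[OF d hl])
      thus "(\<lambda>k. s k \<beta>) \<longlonglongrightarrow> f \<beta>" unfolding s_def PhiT Phi0[of \<beta>] by simp
    qed
    show "AE \<beta> in lborel. norm (s k \<beta>) \<le> w \<beta>" for k
    proof (rule AE_I2)
      fix \<beta> :: "real ^ 'd"
      let ?P = "Phi n (\<lambda>i. x i \<bullet> \<beta>) (\<lambda>i. x i \<bullet> a)"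
      let ?P' = "Phi' n (\<lambda>i. x i \<bullet> \<beta>) (\<lambda>i. x i \<bullet> a)"
      obtain z where z: "0 < z" "z < h k" "?P (h k) - ?P 0 = (h k - 0) * ?P' z"
        using MVT2[OF hpos[of k], of ?P ?P'] Phi_deriv by blast
      have "norm (s k \<beta>) = \<bar>?P' z\<bar>"
        unfolding s_def PhiT Phi0[of \<beta>] z(3) using hpos[of k] by simp
      also have "\<dots> \<le> ?P z * K" unfolding K_def by (rule Phi'_bound)
      also have "\<dots> \<le> (exp (K * \<bar>z\<bar>) * ?P 0) * K"
        by (intro mult_right_mono) (use Phi_grow[of n "\<lambda>i. x i \<bullet> \<beta>" "\<lambda>i. x i \<bullet> a" z] in \<open>auto simp: K_def\<close>)
      also have "\<dots> \<le> (exp K * ?P 0) * K"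
      proof -
        have "K \<ge> 0" unfolding K_def by (simp add: sum_nonneg)
        moreover have "\<bar>z\<bar> \<le> 1" using z hle[of k] by simp
        ultimately have "K * \<bar>z\<bar> \<le> K" by (simp add: mult_left_le)
        moreover have "?P 0 \<ge> 0" by (simp add: Phi_def)
        ultimately show ?thesis using \<open>K \<ge> 0\<close> by (intro mult_right_mono) auto
      qed
      also have "\<dots> = w \<beta>" unfolding w_def Phi0 by simp
      finally show "norm (s k \<beta>) \<le> w \<beta>" .
    qed
  qed
  hence "(\<integral>\<beta>. f \<beta> \<partial>lborel) = 0" using sint0 by (simp add: LIMSEQ_const_iff)
  thus ?thesis unfolding f_def g_def L_def by simp
qed



lemma sphere_bound:
  fixes F :: "real ^ 'd \<Rightarrow> real"
  assumes rho: "\<rho> > 0" and Fm: "F \<in> borel_measurable borel" and B: "B \<ge> 0"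
    and bnd: "\<And>y. y \<in> ball 0 \<rho> \<Longrightarrow> \<bar>F ((\<rho> / norm y) *\<^sub>R y)\<bar> \<le> B"
  shows "\<bar>\<integral>\<beta>. F \<beta> \<partial>(sphere_measure \<rho> :: (real ^ 'd) measure)\<bar>
           \<le> real CARD('d) / \<rho> * B * (unit_ball_vol (real CARD('d)) * \<rho> ^ CARD('d))"
proof (cases "integrable (sphere_measure \<rho> :: (real ^ 'd) measure) F")
  case False
  thus ?thesis using rho B by (simp add: not_integrable_integral_eq)
next
  case True
  define T where "T y = (\<rho> / norm y) *\<^sub>R y" for y :: "real ^ 'd"
  have Tm: "T \<in> borel_measurable borel" unfolding T_def by measurable
  have Tm2: "T \<in> measurable (restrict_space lborel (ball 0 \<rho>)) borel"
    by (rule measurable_restrict_space1) (use Tm in simp)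
  have "ennreal (norm (\<integral>\<beta>. F \<beta> \<partial>(sphere_measure \<rho> :: (real ^ 'd) measure)))
        \<le> (\<integral>\<^sup>+\<beta>. norm (F \<beta>) \<partial>(sphere_measure \<rho> :: (real ^ 'd) measure))"
    by (rule integral_norm_bound_ennreal[OF True])
  also have "\<dots> = ennreal (real CARD('d) / \<rho>) *
      (\<integral>\<^sup>+y. ennreal (norm (F (T y))) * indicator (ball 0 \<rho>) y \<partial>lborel)"
    unfolding sphere_measure_def T_def[symmetric]
    by (subst nn_integral_scale_measure, use Fm in simp,
        subst nn_integral_distr[OF Tm2], use Fm in simp,
        subst nn_integral_restrict_space, simp_all)
  also have "\<dots> \<le> ennreal (real CARD('d) / \<rho>) * (\<integral>\<^sup>+y. ennreal B * indicator (ball (0::real^'d) \<rho>) y \<partial>lborel)"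
    apply (intro mult_left_mono nn_integral_mono)
    subgoal for y using bnd[of y] by (cases "y \<in> ball 0 \<rho>") (auto simp: T_def ennreal_leI)
    by simp
  also have "\<dots> = ennreal (real CARD('d) / \<rho> * B * (unit_ball_vol (real CARD('d)) * \<rho> ^ CARD('d)))"
    using rho B by (subst nn_integral_cmult_indicator) (simp_all add: emeasure_ball ennreal_mult[symmetric] mult.assoc)
  finally show ?thesis using rho B by (simp add: ennreal_le_iff)
qed



lemma L_deriv:
  fixes x :: "nat \<Rightarrow> real ^ 'd"
  shows "((\<lambda>b. - (\<Sum>i<n. ln (1 + exp (x i \<bullet> b))) - z) has_derivative
     (\<lambda>v. - (\<Sum>i<n. exp (x i \<bullet> \<beta>) / (1 + exp (x i \<bullet> \<beta>)) * (x i \<bullet> v)))) (at \<beta>)"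
  apply (rule derivative_eq_intros refl | simp)+
  apply (rule ext)
  apply (simp add: divide_inverse mult_ac)
  done

theorem mainTheorem9:
  fixes n :: nat and x :: "nat \<Rightarrow> real ^ 'd" and a :: "real ^ 'd"
  assumes nonzero: "\<And>i. i < n \<Longrightarrow> x i \<noteq> 0"
    and unique_max: "\<exists>!b. \<forall>\<beta>. logit_lik n x \<beta> \<le> logit_lik n x b"
  defines "P \<equiv> (\<lambda>\<beta>::real ^ 'd. \<Sum>j\<in>UNIV. a $ j * \<beta> $ j)"
  shows "((\<lambda>\<rho>. \<integral>\<beta>. logit_post n x \<beta> * frechet_derivative P (at \<beta>) (\<beta> /\<^sub>R \<rho>) \<partial>sphere_measure \<rho>)
            \<longlongrightarrow> 0) at_top \<and>
         integrable lborel (\<lambda>\<beta>. logit_post n x \<beta> *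
            (- (1/2) * frechet_derivative (\<lambda>b. ln (logit_post n x b)) (at \<beta>) a)) \<and>
         (\<integral>\<beta>. logit_post n x \<beta> *
            (- (1/2) * frechet_derivative (\<lambda>b. ln (logit_post n x b)) (at \<beta>) a) \<partial>lborel) = 0"
proof -
  obtain c where c: "c > 0" "\<And>\<beta>. logit_lik n x \<beta> \<le> exp (- c * norm \<beta>)"
    using decay[OF unique_max] by blast
  have lm[measurable]: "logit_lik n x \<in> borel_measurable borel" by (rule ell_meas)
  have int: "integrable lborel (logit_lik n x)"
  proof (rule Bochner_Integration.integrable_bound[OF exp_norm_integrable[OF c(1)]])
    show "logit_lik n x \<in> borel_measurable lborel" by simp
    show "AE \<beta> in lborel. norm (logit_lik n x \<beta>) \<le> norm (exp (- c * norm \<beta>))"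
    proof (rule AE_I2)
      fix \<beta> :: "real ^ 'd"
      show "norm (logit_lik n x \<beta>) \<le> norm (exp (- c * norm \<beta>))"
        using c(2)[of \<beta>] ell_pos[of n x \<beta>] by simp
    qed
  qed
  define Z where "Z = (\<integral>b. logit_lik n x b \<partial>lborel)"
  have Zpos: "Z > 0"
  proof -
    have "Z \<ge> 0" unfolding Z_def by (rule integral_nonneg_AE) (simp add: less_imp_le[OF ell_pos])
    moreover have "Z \<noteq> 0"
    proof
      assume "Z = 0"
      hence "AE b in lborel. logit_lik n x b = 0"
        unfolding Z_def by (subst (asm) integral_nonneg_eq_0_iff_AE[OF int]) (auto simp: less_imp_le[OF ell_pos])
      moreover have "\<And>b. logit_lik n x b \<noteq> 0" using ell_pos by (metis less_irrefl)
      ultimately have "AE b::real^'d in lborel. False" by simp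
      thus False using AE_iff_measurable[of "space lborel" "lborel::(real^'d) measure" "\<lambda>_. False"] by simp
    qed
    ultimately show ?thesis by simp
  qed
  have postE: "logit_post n x b = logit_lik n x b / Z" for b
    unfolding logit_post_def Z_def ..
  define g where "g \<beta> = (\<Sum>i<n. exp (x i \<bullet> \<beta>) / (1 + exp (x i \<bullet> \<beta>)) * (x i \<bullet> a))" for \<beta> :: "real ^ 'd"
  have lnpost: "(\<lambda>b. ln (logit_post n x b)) = (\<lambda>b. - (\<Sum>i<n. ln (1 + exp (x i \<bullet> b))) - ln Z)"
  proof (rule ext)
    fix b
    show "ln (logit_post n x b) = - (\<Sum>i<n. ln (1 + exp (x i \<bullet> b))) - ln Z"
      unfolding postE using Zpos ell_pos[of n x b] by (simp add: ln_div ell_exp)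
  qed
  have fdL: "frechet_derivative (\<lambda>b. ln (logit_post n x b)) (at \<beta>) a = - g \<beta>" for \<beta>
    unfolding lnpost frechet_derivative_at[OF L_deriv, symmetric] g_def by simp
  have integrand: "logit_post n x \<beta> * (- (1/2) * frechet_derivative (\<lambda>b. ln (logit_post n x b)) (at \<beta>) a)
      = (logit_lik n x \<beta> * g \<beta>) / (2 * Z)" for \<beta>
    unfolding fdL by (simp add: postE)
  define K where "K = (\<Sum>i<n. \<bar>x i \<bullet> a\<bar>)"
  have gb: "\<bar>g \<beta>\<bar> \<le> K" for \<beta> unfolding g_def K_def by (rule sum_sig_abs)
  have intg: "integrable lborel (\<lambda>\<beta>. logit_lik n x \<beta> * g \<beta>)"
  proof (rule Bochner_Integration.integrable_bound[where f = "\<lambda>\<beta>. K * logit_lik n x \<beta>"])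
    show "integrable lborel (\<lambda>\<beta>. K * logit_lik n x \<beta>)" using int by simp
    show "(\<lambda>\<beta>. logit_lik n x \<beta> * g \<beta>) \<in> borel_measurable lborel" unfolding g_def by measurable
    show "AE \<beta> in lborel. norm (logit_lik n x \<beta> * g \<beta>) \<le> norm (K * logit_lik n x \<beta>)"
    proof (rule AE_I2)
      fix \<beta> :: "real ^ 'd"
      have "K \<ge> 0" unfolding K_def by (simp add: sum_nonneg)
      thus "norm (logit_lik n x \<beta> * g \<beta>) \<le> norm (K * logit_lik n x \<beta>)"
        using gb[of \<beta>] ell_pos[of n x \<beta>] by (simp add: abs_mult mult.commute mult_left_mono)
    qed
  qed
  have part23: "integrable lborel (\<lambda>\<beta>. logit_post n x \<beta> *
            (- (1/2) * frechet_derivative (\<lambda>b. ln (logit_post n x b)) (at \<beta>) a)) \<and>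
         (\<integral>\<beta>. logit_post n x \<beta> *
            (- (1/2) * frechet_derivative (\<lambda>b. ln (logit_post n x b)) (at \<beta>) a) \<partial>lborel) = 0"
    unfolding integrand using intg integral_zero[OF int, of a] unfolding g_def by simp
  have P_eq: "P = (\<lambda>v. a \<bullet> v)" unfolding P_def by (rule ext) (simp add: inner_vec_def)
  have fdP: "frechet_derivative P (at \<beta>) = (\<lambda>v. a \<bullet> v)" for \<beta>
    unfolding P_eq
    by (rule frechet_derivative_at[symmetric], rule bounded_linear_imp_has_derivative)
       (rule bounded_linear_inner_right)
  define D where "D = CARD('d)"
  define V where "V = unit_ball_vol (real D)"
  have Vnn: "V \<ge> 0" unfolding V_def by simp
  define I where "I \<rho> = (\<integral>\<beta>. logit_post n x \<beta> * frechet_derivative P (at \<beta>) (\<beta> /\<^sub>R \<rho>) \<partial>sphere_measure \<rho>)" for \<rho>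
  have bound: "\<bar>I \<rho>\<bar> \<le> real D / \<rho> * (norm a * exp (- c * \<rho>) / Z) * (V * \<rho> ^ D)" if rho: "\<rho> > 0" for \<rho>
  proof -
    have "I \<rho> = (\<integral>\<beta>. logit_post n x \<beta> * (a \<bullet> (\<beta> /\<^sub>R \<rho>)) \<partial>sphere_measure \<rho>)"
      unfolding I_def fdP ..
    also have "\<bar>\<dots>\<bar> \<le> real D / \<rho> * (norm a * exp (- c * \<rho>) / Z) * (V * \<rho> ^ D)"
      unfolding D_def V_def
    proof (rule sphere_bound[OF rho])
      have "(\<lambda>\<beta>. logit_lik n x \<beta> / Z * (a \<bullet> (\<beta> /\<^sub>R \<rho>))) \<in> borel_measurable borel" by measurable
      thus "(\<lambda>\<beta>. logit_post n x \<beta> * (a \<bullet> (\<beta> /\<^sub>R \<rho>))) \<in> borel_measurable borel" by (simp add: postE)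
      show "0 \<le> norm a * exp (- c * \<rho>) / Z" using Zpos by simp
      fix y :: "real ^ 'd"
      assume y: "y \<in> ball 0 \<rho>"
      define t where "t = (\<rho> / norm y) *\<^sub>R y"
      show "\<bar>logit_post n x t * (a \<bullet> (t /\<^sub>R \<rho>))\<bar> \<le> norm a * exp (- c * \<rho>) / Z"
      proof (cases "y = 0")
        case True
        thus ?thesis unfolding t_def using Zpos by simp
      next
        case False
        have nt: "norm t = \<rho>" unfolding t_def using False rho by simp
        have a1: "\<bar>a \<bullet> (t /\<^sub>R \<rho>)\<bar> \<le> norm a"
          using Cauchy_Schwarz_ineq2[of a "t /\<^sub>R \<rho>"] nt rho by simp
        have p1: "logit_post n x t \<le> exp (- c * \<rho>) / Z"
          unfolding postE using c(2)[of t] nt Zpos by (simp add: divide_right_mono)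
        have p0: "logit_post n x t \<ge> 0" unfolding postE using Zpos ell_pos[of n x t] by simp
        have "\<bar>logit_post n x t * (a \<bullet> (t /\<^sub>R \<rho>))\<bar> = logit_post n x t * \<bar>a \<bullet> (t /\<^sub>R \<rho>)\<bar>"
          using p0 by (simp add: abs_mult)
        also have "\<dots> \<le> (exp (- c * \<rho>) / Z) * norm a"
          using p0 p1 a1 by (intro mult_mono) auto
        finally show ?thesis by (simp add: mult.commute)
      qed
    qed
    finally show ?thesis .
  qed
  have lim0: "((\<lambda>\<rho>. (c * \<rho>) ^ D / exp (c * \<rho>)) \<longlongrightarrow> 0) at_top"
    by (rule filterlim_compose[OF tendsto_power_div_exp_0])
       (rule filterlim_tendsto_pos_mult_at_top[OF tendsto_const c(1) filterlim_ident])
  define M where "M = real D * norm a * V / Z / c ^ D"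
  have lim1: "((\<lambda>\<rho>. M * ((c * \<rho>) ^ D / exp (c * \<rho>))) \<longlongrightarrow> 0) at_top"
    using tendsto_mult_right_zero[OF lim0, of M] .
  have part1: "(I \<longlongrightarrow> 0) at_top"
  proof (rule Lim_null_comparison[OF _ lim1])
    show "\<forall>\<^sub>F \<rho> in at_top. norm (I \<rho>) \<le> M * ((c * \<rho>) ^ D / exp (c * \<rho>))"
      using eventually_ge_at_top[of "1::real"]
    proof eventually_elim
      case (elim \<rho>)
      hence rho: "\<rho> > 0" by simp
      have "norm (I \<rho>) \<le> real D / \<rho> * (norm a * exp (- c * \<rho>) / Z) * (V * \<rho> ^ D)"
        using bound[OF rho] by simp
      also have "\<dots> \<le> real D * (norm a * exp (- c * \<rho>) / Z) * (V * \<rho> ^ D)"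
      proof -
        have "real D / \<rho> \<le> real D" using elim mult_right_mono[OF elim, of "real D"] by (simp add: divide_le_eq mult.commute)
        thus ?thesis using Zpos Vnn rho by (intro mult_right_mono) auto
      qed
      also have "\<dots> = M * ((c * \<rho>) ^ D / exp (c * \<rho>))"
        unfolding M_def using c(1) Zpos by (simp add: power_mult_distrib exp_minus field_simps)
      finally show ?case .
    qed
  qed
  show ?thesis using part1 part23 unfolding I_def by simp
qed

end
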